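(* Let $M<N$ and $1\le k\le N$ be positive integers. For any function $i:\{1,2,\ldots,2k\}\to\{1,2,\ldots,N\}$, \[ \int_{\mathbf{A}(M,N)} A_{i(1)i(2)}A_{i(3)i(4)}\cdots A_{i(2k-1)i(2k)}\,\mathrm{d}\mu=\sum_{\mathfrak{m}\in\mathcal{P}_k}\Delta_{\mathfrak{m}}(i)\,\mathrm{Wg}^{\mathbf{A}}(\mathfrak{m}), \] where $\Delta_{\mathfrak{m}}(i)=1$ if $i$ is admissible for $\mathfrak{m}$ and $\Delta_{\mathfrak{m}}(i)=0$ otherwise.
   Context: $\mathbf{A}(M,N)$ is the space of $N\times N$ real symmetric idempotent matrices of rank $M$, equivalently $\{O I_{M,N}O^T: O\in \mathrm{O}(N)\}$, where $I_{M,N}$ is the $N\times N$ diagonal matrix whose first $M$ diagonal entries are $1$ and the rest $0$. $\mathrm{d}\mu$ is the $\mathrm{O}(N)$-invariant probability (Haar) measure on $\mathbf{A}(M,N)$ induced from normalised Haar measure on $\mathrm{O}(N)$ via $O\mapsto OI_{M,N}O^T$; $A_{ij}$ denotes the $(i,j)$ matrix entry function. A pair partition of $\{1,\ldots,2k\}$ is a partition of this set into two-element blocks; $\mathcal{P}_k$ is the set of these ($\mathcal{P}_0$ consists of the empty pair partition). A function $i:\{1,\ldots,2k\}\to\{1,\ldots,N\}$ is admissible for $\mathfrak{m}$ if $\{a,b\}\in\mathfrak{m}$ implies $i(a)=i(b)$, and strongly admissible for $\mathfrak{m}$ if for all $a\ne b$, $\{a,b\}\in\mathfrak{m}\iff i(a)=i(b)$.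 The Weingarten function is $\mathrm{Wg}^{\mathbf{A}}(\mathfrak{m})=\int_{\mathbf{A}(M,N)}A_{i(1)i(2)}\cdots A_{i(2k-1)i(2k)}\,\mathrm{d}\mu$ for $\mathfrak{m}\in\mathcal{P}_k$, where $i$ is any strongly admissible function for $\mathfrak{m}$ (this is independent of the choice of $i$), and $\mathrm{Wg}^{\mathbf{A}}$ of the empty pair partition is $1$. *)

theory Defs
  imports "HOL-Probability.Probability"
begin

text \<open>Matrices are N x N real matrices indexed by a finite type 'n with CARD('n) = N.\<close>

definition proj_space :: "nat \<Rightarrow> (real^'n^'n) set" where
  "proj_space M = {A. transpose A = A \<and> A ** A = A \<and> rank A = M}"

text \<open>mu is an O(N)-invariant probability (Haar) measure on A(M,N), viewed as a
  Borel probability measure on all N x N matrices concentrated on A(M,N).\<close>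
definition haar_proj :: "nat \<Rightarrow> (real^'n^'n) measure \<Rightarrow> bool" where
  "haar_proj M mu \<longleftrightarrow> prob_space mu \<and> sets mu = sets borel \<and>
     emeasure mu (proj_space M) = 1 \<and>
     (\<forall>Q. orthogonal_matrix Q \<longrightarrow> distr mu borel (\<lambda>A. Q ** A ** transpose Q) = mu)"

definition pair_partition :: "nat \<Rightarrow> nat set set \<Rightarrow> bool" where
  "pair_partition k m \<longleftrightarrow> partition_on {1..2*k} m \<and> (\<forall>b\<in>m. card b = 2)"

definition admissible :: "nat set set \<Rightarrow> (nat \<Rightarrow> 'a) \<Rightarrow> bool" where
  "admissible m i \<longleftrightarrow> (\<forall>a b. {a, b} \<in> m \<longrightarrow> i a = i b)"

definition strongly_admissible :: "nat \<Rightarrow> nat set set \<Rightarrow> (nat \<Rightarrow> 'a) \<Rightarrow> bool" where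
  "strongly_admissible k m i \<longleftrightarrow>
     (\<forall>a\<in>{1..2*k}. \<forall>b\<in>{1..2*k}. a \<noteq> b \<longrightarrow> ({a, b} \<in> m \<longleftrightarrow> i a = i b))"

definition moment :: "(real^'n^'n) measure \<Rightarrow> nat \<Rightarrow> (nat \<Rightarrow> 'n) \<Rightarrow> real" where
  "moment mu k i = (LINT A|mu. (\<Prod>j\<in>{1..k}. A $ i (2*j - 1) $ i (2*j)))"

definition WgA :: "(real^'n^'n) measure \<Rightarrow> nat \<Rightarrow> nat set set \<Rightarrow> real" where
  "WgA mu k m = (if m = {} then 1
     else moment mu k (SOME i :: nat \<Rightarrow> 'n. strongly_admissible k m i))"

end

theory Submission
  imports Defs
begin



definition GG :: "real^'n^'n \<Rightarrow> nat \<Rightarrow> (nat \<Rightarrow> 'n) \<Rightarrow> real" where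
  "GG A k i = (\<Prod>j\<in>{1..k}. A $ i (2*j - 1) $ i (2*j))"

lemma cont_GG: "continuous_on UNIV (\<lambda>A. GG A k i)"
  unfolding GG_def by (intro continuous_intros)

lemma meas_GG: "(\<lambda>A. GG A k i) \<in> borel_measurable borel"
  by (rule borel_measurable_continuous_onI[OF cont_GG])

lemma cont_conj: "continuous_on UNIV (\<lambda>A::real^'n^'n. Q ** A ** transpose Q)"
  unfolding matrix_matrix_mult_def by (intro continuous_intros)

lemma meas_conj: "(\<lambda>A::real^'n^'n. Q ** A ** transpose Q) \<in> borel_measurable borel"
  by (rule borel_measurable_continuous_onI[OF cont_conj])




lemma haar_prob: "haar_proj M mu \<Longrightarrow> prob_space mu"
  by (simp add: haar_proj_def)

lemma haar_AE:
  assumes "haar_proj M mu" shows "AE A in mu. A \<in> proj_space M"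
proof -
  interpret prob_space mu using assms by (simp add: haar_proj_def)
  have "emeasure mu (proj_space M) = 1" using assms by (simp add: haar_proj_def)
  then have "prob (proj_space M) = 1" by (simp add: measure_def)
  then show ?thesis by (rule AE_prob_1)
qed

lemma proj_bound:
  fixes A :: "real^'n^'n"
  assumes "A \<in> proj_space M" shows "\<bar>A $ p $ q\<bar> \<le> 1"
proof -
  have sym: "transpose A = A" and idem: "A ** A = A" using assms by (auto simp: proj_space_def)
  have sq: "A $ x $ y = A $ y $ x" for x y using sym by (metis transpose_def vec_lambda_beta)
  have diag: "A $ p $ p = (\<Sum>r\<in>UNIV. (A $ p $ r)^2)"
  proof -
    have "A $ p $ p = (A ** A) $ p $ p" using idem by simp
    also have "\<dots> = (\<Sum>r\<in>UNIV. A $ p $ r * A $ r $ p)" by (simp add: matrix_matrix_mult_def)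
    also have "\<dots> = (\<Sum>r\<in>UNIV. (A $ p $ r)^2)"
      by (intro sum.cong refl) (metis sq power2_eq_square)
    finally show ?thesis .
  qed
  have le1: "(A $ p $ r)^2 \<le> A $ p $ p" for r
    unfolding diag by (rule member_le_sum) auto
  have "(A $ p $ p)^2 \<le> A $ p $ p" using le1[of p] .
  have "A $ p $ p \<le> 1"
  proof (rule ccontr)
    assume "\<not> A $ p $ p \<le> 1"
    then have "A $ p $ p * 1 < A $ p $ p * A $ p $ p" by (intro mult_strict_left_mono) auto
    with \<open>(A $ p $ p)^2 \<le> A $ p $ p\<close> show False by (simp add: power2_eq_square)
  qed
  with le1[of q] have "(A $ p $ q)^2 \<le> 1" by linarith
  then show ?thesis by (metis abs_le_square_iff abs_one one_power2)
qed

lemma GG_bound: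
  assumes "\<And>p q. \<bar>A $ p $ q\<bar> \<le> 1" shows "\<bar>GG A k i\<bar> \<le> 1"
  unfolding GG_def abs_prod by (rule prod_le_1) (auto simp: assms)

lemma integrable_GG:
  assumes "haar_proj M mu" shows "integrable mu (\<lambda>A. GG A k j)"
proof -
  interpret prob_space mu using assms by (simp add: haar_proj_def)
  have sets: "sets mu = sets borel" using assms by (simp add: haar_proj_def)
  show ?thesis
  proof (rule integrable_const_bound[where B=1])
    show "AE x in mu. norm (GG x k j) \<le> 1"
      using haar_AE[OF assms] by eventually_elim (auto intro!: GG_bound proj_bound)
    show "(\<lambda>A. GG A k j) \<in> borel_measurable mu"
      using meas_GG measurable_cong_sets[OF sets refl] by blast
  qed
qed

lemma moment_GG: "moment mu k i = (LINT A|mu. GG A k i)"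
  by (simp add: moment_def GG_def)

lemma moment_inv:
  assumes "haar_proj M mu" "orthogonal_matrix Q"
  shows "moment mu k i = (LINT A|mu. GG (Q ** A ** transpose Q) k i)"
proof -
  have sets: "sets mu = sets borel" using assms by (simp add: haar_proj_def)
  have d: "distr mu borel (\<lambda>A. Q ** A ** transpose Q) = mu" using assms by (simp add: haar_proj_def)
  have m: "(\<lambda>A. Q ** A ** transpose Q) \<in> measurable mu borel"
    using meas_conj measurable_cong_sets[OF sets refl] by blast
  have "moment mu k i = (LINT A|distr mu borel (\<lambda>A. Q ** A ** transpose Q). GG A k i)"
    by (simp add: moment_GG d)
  also have "\<dots> = (LINT A|mu. GG (Q ** A ** transpose Q) k i)"
    by (rule integral_distr[OF m meas_GG])
  finally show ?thesis .
qed




definition ev :: "'n \<Rightarrow> real^'n" where "ev p = axis p 1"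

definition FA :: "real^'n^'n \<Rightarrow> nat \<Rightarrow> (nat \<Rightarrow> real^'n) \<Rightarrow> real" where
  "FA A k u = (\<Prod>t\<in>{1..k}. u (2*t - 1) \<bullet> (A *v u (2*t)))"

definition FD :: "nat set set \<Rightarrow> (nat \<Rightarrow> real^'n) \<Rightarrow> real" where
  "FD m u = (\<Prod>b\<in>m. u (Min b) \<bullet> u (Max b))"

definition lin_at :: "((nat \<Rightarrow> real^'n) \<Rightarrow> real) \<Rightarrow> nat \<Rightarrow> bool" where
  "lin_at F a \<longleftrightarrow> (\<forall>u x y s t. F (u(a := s *\<^sub>R x + t *\<^sub>R y)) = s * F (u(a := x)) + t * F (u(a := y)))"

lemma entry_ev: "A $ p $ q = ev p \<bullet> (A *v ev q)"
  by (simp add: ev_def matrix_vector_mult_basis inner_axis' column_def)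

lemma GG_FA: "GG A k i = FA A k (\<lambda>a. ev (i a))"
  by (simp add: GG_def FA_def entry_ev)

lemma conj_form: fixes Q A :: "real^'n^'n" shows "x \<bullet> ((Q ** A ** transpose Q) *v y) = (transpose Q *v x) \<bullet> (A *v (transpose Q *v y))"
proof -
  have "(Q ** A ** transpose Q) *v y = Q *v (A *v (transpose Q *v y))" by (simp only: matrix_vector_mul_assoc matrix_mul_assoc)
  moreover have "(transpose Q *v x) \<bullet> z = x \<bullet> (Q *v z)" for z
  proof -
    have "(transpose Q *v x) \<bullet> z = (\<Sum>i\<in>(UNIV::'n set). (\<Sum>j\<in>(UNIV::'n set). Q$j$i * x$j) * z$i)"
      by (simp add: inner_vec_def matrix_vector_mult_def transpose_def inner_real_def)
    also have "\<dots> = (\<Sum>i\<in>UNIV. \<Sum>j\<in>UNIV. Q$j$i * x$j * z$i)" by (simp add: sum_distrib_right)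
    also have "\<dots> = (\<Sum>j\<in>UNIV. \<Sum>i\<in>UNIV. Q$j$i * x$j * z$i)" by (rule sum.swap)
    also have "\<dots> = (\<Sum>j\<in>UNIV. x$j * (\<Sum>i\<in>UNIV. Q$j$i * z$i))" by (simp add: sum_distrib_left mult_ac)
    also have "\<dots> = x \<bullet> (Q *v z)" by (simp add: inner_vec_def matrix_vector_mult_def inner_real_def)
    finally show ?thesis .
  qed
  ultimately show ?thesis by (simp only:)
qed

lemma row_ev: "transpose Q *v ev p = (Q::real^'n^'n) $ p"
  by (simp add: ev_def vec_eq_iff matrix_vector_mult_def transpose_def axis_def if_distrib[of "\<lambda>z. _ * z"] if_distrib[of "\<lambda>z. z * _"] cong: if_cong)

lemma GG_conj: fixes Q A :: "real^'n^'n" shows "GG (Q ** A ** transpose Q) k i = FA A k (\<lambda>a. Q $ (i a))"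
  unfolding GG_FA FA_def
proof (intro prod.cong refl)
  fix t
  show "ev (i (2 * t - 1)) \<bullet> ((Q ** A ** transpose Q) *v ev (i (2 * t))) = Q $ i (2 * t - 1) \<bullet> (A *v Q $ i (2 * t))"
    apply (rule trans[OF conj_form])
    apply (simp only: row_ev)
    done
qed

lemma lin_prod:
  assumes "finite I" "t0 \<in> I" "lin_at (g t0) a"
    and "\<And>t u z. t \<in> I \<Longrightarrow> t \<noteq> t0 \<Longrightarrow> g t (u(a := z)) = g t u"
  shows "lin_at (\<lambda>u. \<Prod>t\<in>I. g t u) a"
  unfolding lin_at_def
proof (intro allI)
  fix u x y s1 s2
  have split: "(\<Prod>t\<in>I. g t w) = g t0 w * (\<Prod>t\<in>I-{t0}. g t u)" if w: "w = u(a:=z)" for w z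
  proof -
    have "(\<Prod>t\<in>I. g t w) = g t0 w * (\<Prod>t\<in>I-{t0}. g t w)"
      using assms(1,2) by (simp add: prod.remove)
    also have "(\<Prod>t\<in>I-{t0}. g t w) = (\<Prod>t\<in>I-{t0}. g t u)"
      using assms(4) w by (intro prod.cong) auto
    finally show ?thesis .
  qed
  let ?R = "\<Prod>t\<in>I-{t0}. g t u"
  have l: "g t0 (u(a := s1 *\<^sub>R x + s2 *\<^sub>R y)) = s1 * g t0 (u(a := x)) + s2 * g t0 (u(a := y))"
    using assms(3) unfolding lin_at_def by blast
  show "(\<Prod>t\<in>I. g t (u(a := s1 *\<^sub>R x + s2 *\<^sub>R y))) = s1 * (\<Prod>t\<in>I. g t (u(a := x))) + s2 * (\<Prod>t\<in>I. g t (u(a := y)))"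
  proof -
    have "(\<Prod>t\<in>I. g t (u(a := s1 *\<^sub>R x + s2 *\<^sub>R y))) = g t0 (u(a := s1 *\<^sub>R x + s2 *\<^sub>R y)) * ?R"
      by (rule split[OF refl])
    also have "\<dots> = s1 * (g t0 (u(a := x)) * ?R) + s2 * (g t0 (u(a := y)) * ?R)"
      unfolding l by (simp only: distrib_right mult.assoc)
    also have "\<dots> = s1 * (\<Prod>t\<in>I. g t (u(a := x))) + s2 * (\<Prod>t\<in>I. g t (u(a := y)))"
      by (simp only: split[OF refl])
    finally show ?thesis .
  qed
qed

lemma lin_bil:
  assumes "\<alpha> \<noteq> \<beta>" "a = \<alpha> \<or> a = \<beta>"
  shows "lin_at (\<lambda>u. u \<alpha> \<bullet> (B *v u \<beta>)) a"
  using assms unfolding lin_at_def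
  by (auto simp: inner_add_left inner_add_right matrix_vector_right_distrib matrix_vector_mult_scaleR)

lemma lin_inner:
  assumes "\<alpha> \<noteq> \<beta>" "a = \<alpha> \<or> a = \<beta>"
  shows "lin_at (\<lambda>u. u \<alpha> \<bullet> u \<beta>) a"
  using assms unfolding lin_at_def
  by (auto simp: inner_add_left inner_add_right)

lemma lin_FA:
  assumes "a \<in> {1..2*k}" shows "lin_at (FA A k) a"
proof -
  let ?t0 = "(a+1) div 2"
  have t0: "?t0 \<in> {1..k}" using assms by auto
  have a: "a = 2*?t0 - 1 \<or> a = 2*?t0" using assms by auto
  have l0: "lin_at (\<lambda>u. u (2*?t0 - 1) \<bullet> (A *v u (2*?t0))) a"
    by (rule lin_bil) (use a t0 in auto)
  have oth: "(u(a:=z)) (2*t - 1) \<bullet> (A *v (u(a:=z)) (2*t)) = u (2*t - 1) \<bullet> (A *v u (2*t))"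
    if "t \<in> {1..k}" "t \<noteq> ?t0" for t u z
  proof -
    have "2*t - 1 \<noteq> a" "2*t \<noteq> a" using that a by auto
    then show ?thesis by simp
  qed
  have "lin_at (\<lambda>u. \<Prod>t\<in>{1..k}. u (2*t - 1) \<bullet> (A *v u (2*t))) a"
    by (rule lin_prod[where g="\<lambda>t u. u (2*t - 1) \<bullet> (A *v u (2*t))", OF _ t0 l0 oth]) auto
  then show ?thesis unfolding FA_def[abs_def] .
qed




lemma expand:
  assumes "finite V" "\<forall>a\<in>V. lin_at F a"
  shows "F (\<lambda>b. if b \<in> V then c *\<^sub>R (x - y) else u b) =
    c ^ card V * (\<Sum>U\<in>Pow V. (-1) ^ card U * F (\<lambda>b. if b \<in> U then y else if b \<in> V then x else u b))"
  using assms
proof (induction V arbitrary: u rule: finite_induct)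
  case empty
  then show ?case by simp
next
  case (insert a V)
  let ?z = "c *\<^sub>R (x - y)"
  define h where "h U = (\<lambda>b. if b \<in> U then y else if b \<in> insert a V then x else u b)" for U
  have lina: "lin_at F a" using insert.prems by simp
  have linV: "\<forall>a\<in>V. lin_at F a" using insert.prems by simp
  have eq1: "(\<lambda>b. if b \<in> insert a V then ?z else u b) = (\<lambda>b. if b \<in> V then ?z else (u(a := ?z)) b)"
    using insert.hyps by auto
  have step: "F (\<lambda>b. if b \<in> U then y else if b \<in> V then x else (u(a := ?z)) b) = c * F (h U) - c * F (h (insert a U))"
    if "U \<subseteq> V" for U
  proof -
    define g where "g = (\<lambda>b. if b \<in> U then y else if b \<in> V then x else u b)"
    have aU: "a \<notin> U" using that insert.hyps by auto
    have e1: "(\<lambda>b. if b \<in> U then y else if b \<in> V then x else (u(a := ?z)) b) = g(a := c *\<^sub>R x + (-c) *\<^sub>R y)"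
      using aU insert.hyps by (auto simp: g_def fun_eq_iff scaleR_diff_right)
    have e2: "g(a := x) = h U" using aU insert.hyps by (auto simp: g_def h_def fun_eq_iff)
    have e3: "g(a := y) = h (insert a U)" using aU insert.hyps by (auto simp: g_def h_def fun_eq_iff)
    have "F (g(a := c *\<^sub>R x + (-c) *\<^sub>R y)) = c * F (g(a:=x)) + (-c) * F (g(a:=y))"
      using lina unfolding lin_at_def by blast
    then show ?thesis unfolding e1 e2 e3 by simp
  qed
  have "F (\<lambda>b. if b \<in> insert a V then ?z else u b)
      = c ^ card V * (\<Sum>U\<in>Pow V. (-1) ^ card U * (c * F (h U) - c * F (h (insert a U))))"
    unfolding eq1 insert.IH[OF linV] using step by (intro arg_cong[where f="\<lambda>s. c ^ card V * s"] sum.cong) auto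
  also have "\<dots> = c ^ card (insert a V) * ((\<Sum>U\<in>Pow V. (-1) ^ card U * F (h U)) +
       (\<Sum>U\<in>Pow V. (-1) ^ card (insert a U) * F (h (insert a U))))"
  proof -
    have "card (insert a U) = Suc (card U)" if "U \<in> Pow V" for U
    proof -
      have "finite U" "a \<notin> U" using that insert.hyps finite_subset[of U V] by auto
      then show ?thesis by simp
    qed
    then have "(\<Sum>U\<in>Pow V. (-1) ^ card (insert a U) * F (h (insert a U))) = (\<Sum>U\<in>Pow V. - ((-1) ^ card U * F (h (insert a U))))"
      by (intro sum.cong) auto
    then show ?thesis using insert.hyps
      by (simp add: sum_distrib_left sum_subtractf algebra_simps sum_negf)
  qed
  also have "(\<Sum>U\<in>Pow V. (-1) ^ card (insert a U) * F (h (insert a U))) = (\<Sum>U\<in>insert a ` Pow V. (-1) ^ card U * F (h U))"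
  proof -
    have "inj_on (insert a) (Pow V)"
    proof (rule inj_onI)
      fix X Y assume XY: "X \<in> Pow V" "Y \<in> Pow V" "insert a X = insert a Y"
      then have "a \<notin> X" "a \<notin> Y" using insert.hyps by auto
      then show "X = Y" using XY(3) by (metis Diff_insert_absorb)
    qed
    then show ?thesis by (simp add: sum.reindex)
  qed
  also have "(\<Sum>U\<in>Pow V. (-1) ^ card U * F (h U)) + (\<Sum>U\<in>insert a ` Pow V. (-1) ^ card U * F (h U))
      = (\<Sum>U\<in>Pow (insert a V). (-1) ^ card U * F (h U))"
  proof -
    have "Pow V \<inter> insert a ` Pow V = {}" using insert.hyps by auto
    then show ?thesis unfolding Pow_insert using insert.hyps by (simp add: sum.union_disjoint)
  qed
  finally show ?case by (simp add: h_def)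
qed




lemma ev_inner: "ev p \<bullet> ev q = (if p = q then 1 else 0)"
  by (simp add: ev_def inner_axis_axis)

lemma pp_finite: "pair_partition k m \<Longrightarrow> finite m"
  unfolding pair_partition_def partition_on_def
  by (metis finite_UnionD finite_atLeastAtMost)

lemma pp_sub: "pair_partition k m \<Longrightarrow> b \<in> m \<Longrightarrow> b \<subseteq> {1..2*k}"
  unfolding pair_partition_def partition_on_def by blast

lemma pp_card: "pair_partition k m \<Longrightarrow> b \<in> m \<Longrightarrow> card b = 2"
  unfolding pair_partition_def by blast

lemma card2_MinMax:
  assumes "card (b::nat set) = 2"
  shows "b = {Min b, Max b}" "Min b \<noteq> Max b" "Min b < Max b"
proof -
  obtain x y where b: "b = {x, y}" "x \<noteq> y" using assms by (auto simp: card_Suc_eq numeral_2_eq_2)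
  then show "b = {Min b, Max b}" "Min b \<noteq> Max b" "Min b < Max b"
    by (cases "x < y"; auto simp: min_def max_def)+
qed

lemma pp_cover: "pair_partition k m \<Longrightarrow> a \<in> {1..2*k} \<Longrightarrow> \<exists>b\<in>m. a \<in> b"
  unfolding pair_partition_def partition_on_def by blast

lemma pp_disj: "pair_partition k m \<Longrightarrow> b \<in> m \<Longrightarrow> b' \<in> m \<Longrightarrow> a \<in> b \<Longrightarrow> a \<in> b' \<Longrightarrow> b = b'"
  unfolding pair_partition_def partition_on_def disjoint_def by blast

lemma pp_MinMax_mem:
  assumes "pair_partition k m" "b \<in> m" shows "Min b \<in> b" "Max b \<in> b"
proof -
  have "card b = 2" using pp_card assms by blast
  then show "Min b \<in> b" "Max b \<in> b" using card2_MinMax by (metis insertI1 insertI2 singletonI)+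
qed

lemma admissible_MinMax:
  assumes "pair_partition k m"
  shows "admissible m i \<longleftrightarrow> (\<forall>b\<in>m. i (Min b) = i (Max b))"
proof
  assume "admissible m i"
  then show "\<forall>b\<in>m. i (Min b) = i (Max b)"
    unfolding admissible_def using card2_MinMax(1) pp_card[OF assms] by (metis (no_types))
next
  assume H: "\<forall>b\<in>m. i (Min b) = i (Max b)"
  show "admissible m i" unfolding admissible_def
  proof (intro allI impI)
    fix x y assume xy: "{x, y} \<in> m"
    then have c: "card {x, y} = 2" using pp_card[OF assms] by blast
    then have "x \<noteq> y" by (cases "x = y") auto
    have e: "{x,y} = {Min {x,y}, Max {x,y}}" using card2_MinMax(1)[OF c] .
    have "i (Min {x,y}) = i (Max {x,y})" using H xy by blast
    with e show "i x = i y" by (metis doubleton_eq_iff)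
  qed
qed

lemma FD_ev:
  assumes "pair_partition k m"
  shows "FD m (\<lambda>a. ev (i a)) = (if admissible m i then 1 else 0)"
proof -
  have "FD m (\<lambda>a. ev (i a)) = (\<Prod>b\<in>m. if i (Min b) = i (Max b) then 1 else 0)"
    by (simp add: FD_def ev_inner)
  also have "\<dots> = (if (\<forall>b\<in>m. i (Min b) = i (Max b)) then 1 else 0)"
    using pp_finite[OF assms] by (auto simp: prod.neutral)
  finally show ?thesis using admissible_MinMax[OF assms, of i] by simp
qed

lemma FD_local:
  assumes "pair_partition k m" "\<And>a. a \<in> {1..2*k} \<Longrightarrow> u a = u' a"
  shows "FD m u = FD m u'"
  unfolding FD_def
proof (intro prod.cong refl)
  fix b assume b: "b \<in> m"
  have "Min b \<in> {1..2*k}" "Max b \<in> {1..2*k}" using pp_MinMax_mem[OF assms(1) b] pp_sub[OF assms(1) b] by auto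
  then show "u (Min b) \<bullet> u (Max b) = u' (Min b) \<bullet> u' (Max b)" using assms(2) by simp
qed

lemma FA_local:
  assumes "\<And>a. a \<in> {1..2*k} \<Longrightarrow> u a = u' a"
  shows "FA A k u = FA A k u'"
  unfolding FA_def
proof (intro prod.cong refl)
  fix t assume "t \<in> {1..k}"
  then have "2*t - 1 \<in> {1..2*k}" "2*t \<in> {1..2*k}" by auto
  then show "u (2 * t - 1) \<bullet> (A *v u (2 * t)) = u' (2 * t - 1) \<bullet> (A *v u' (2 * t))" using assms by simp
qed

lemma lin_FD:
  assumes "pair_partition k m" "a \<in> {1..2*k}" shows "lin_at (FD m) a"
proof -
  obtain b0 where b0: "b0 \<in> m" "a \<in> b0" using pp_cover[OF assms] by blast
  have c: "card b0 = 2" using pp_card[OF assms(1) b0(1)] .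
  have l0: "lin_at (\<lambda>u. u (Min b0) \<bullet> u (Max b0)) a"
    by (rule lin_inner) (use card2_MinMax[OF c] b0 in auto)
  have oth: "(u(a:=z)) (Min b) \<bullet> (u(a:=z)) (Max b) = u (Min b) \<bullet> u (Max b)"
    if "b \<in> m" "b \<noteq> b0" for b u z
  proof -
    have "a \<notin> b" using pp_disj[OF assms(1) that(1) b0(1)] b0(2) that(2) by blast
    then have "Min b \<noteq> a" "Max b \<noteq> a" using pp_MinMax_mem[OF assms(1) that(1)] by auto
    then show ?thesis by simp
  qed
  have "lin_at (\<lambda>u. \<Prod>b\<in>m. u (Min b) \<bullet> u (Max b)) a"
    by (rule lin_prod[where g="\<lambda>b u. u (Min b) \<bullet> u (Max b)", OF pp_finite[OF assms(1)] b0(1) l0 oth])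
  then show ?thesis unfolding FD_def[abs_def] .
qed

lemma FD_orth:
  assumes "\<And>p q. r p \<bullet> r q = ev p \<bullet> ev q"
  shows "FD m (\<lambda>a. r (i a)) = FD m (\<lambda>a. ev (i a))"
  unfolding FD_def using assms by simp

lemma orth_rows:
  assumes "\<And>p q. r p \<bullet> r q = (if p = q then 1 else 0)"
  shows "orthogonal_matrix ((\<chi> p. r p) :: real^'n^'n)"
proof -
  let ?Q = "(\<chi> p. r p) :: real^'n^'n"
  have "?Q ** transpose ?Q = mat 1"
    by (simp add: vec_eq_iff matrix_matrix_mult_def transpose_def mat_def assms[symmetric] inner_vec_def)
  then have "orthogonal_matrix (transpose ?Q)" by (simp add: orthogonal_matrix)
  then show ?thesis by simp
qed




lemma moment_rows:
  fixes mu :: "(real^'n^'n) measure" and i :: "nat \<Rightarrow> 'n"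
  assumes "haar_proj M mu" "\<And>p q. r p \<bullet> r q = (if p = q then 1 else 0)"
  shows "moment mu k i = (LINT A|mu. FA A k (\<lambda>a. r (i a)))"
proof -
  let ?Q = "(\<chi> p. r p) :: real^'n^'n"
  have "moment mu k i = (LINT A|mu. GG (?Q ** A ** transpose ?Q) k i)"
    by (rule moment_inv[OF assms(1) orth_rows[OF assms(2)]])
  also have "\<dots> = (LINT A|mu. FA A k (\<lambda>a. r (i a)))"
    by (simp only: GG_conj vec_lambda_beta)
  finally show ?thesis .
qed

lemma moment_local:
  fixes mu :: "(real^'n^'n) measure" and i j :: "nat \<Rightarrow> 'n"
  assumes "\<And>a. a \<in> {1..2*k} \<Longrightarrow> i a = j a"
  shows "moment mu k i = moment mu k j"
proof -
  have "(\<Prod>t\<in>{1..k}. A $ i (2*t - 1) $ i (2*t)) = (\<Prod>t\<in>{1..k}. A $ j (2*t - 1) $ j (2*t))" for A :: "real^'n^'n"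
  proof (intro prod.cong refl)
    fix t assume "t \<in> {1..k}"
    then have "2*t - 1 \<in> {1..2*k}" "2*t \<in> {1..2*k}" by auto
    then show "A $ i (2*t - 1) $ i (2*t) = A $ j (2*t - 1) $ j (2*t)" using assms by simp
  qed
  then show ?thesis by (simp add: moment_def)
qed

lemma moment_perm:
  fixes mu :: "(real^'n^'n) measure" and i :: "nat \<Rightarrow> 'n" and \<sigma> :: "'n \<Rightarrow> 'n"
  assumes "haar_proj M mu" "inj \<sigma>"
  shows "moment mu k (\<lambda>a. \<sigma> (i a)) = moment mu k i"
proof -
  have "moment mu k i = (LINT A|mu. FA A k (\<lambda>a. ev (\<sigma> (i a))))"
    by (rule moment_rows[OF assms(1)]) (use assms(2) in \<open>auto simp: ev_inner inj_eq\<close>)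
  also have "\<dots> = moment mu k (\<lambda>a. \<sigma> (i a))"
    by (simp add: moment_GG GG_FA)
  finally show ?thesis ..
qed

lemma prod_pairs: "(\<Prod>t\<in>{1..(k::nat)}. f (2*t - 1) * f (2*t)) = (\<Prod>a\<in>{1..2*k}. (f a :: real))"
proof (induction k)
  case 0
  then show ?case by simp
next
  case (Suc k)
  have e: "{1..2 * Suc k} = insert (Suc (Suc (2*k))) (insert (Suc (2*k)) {1..2*k})"
    by auto
  have "(\<Prod>t\<in>{1..Suc k}. f (2*t - 1) * f (2*t)) = f (2*Suc k - 1) * f (2*Suc k) * (\<Prod>t\<in>{1..k}. f (2*t - 1) * f (2*t))"
    by (simp add: atLeastAtMostSuc_conv)
  also have "\<dots> = (\<Prod>a\<in>{1..2*Suc k}. f a)"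
    unfolding Suc.IH e by simp
  finally show ?case .
qed

lemma moment_odd:
  fixes mu :: "(real^'n^'n) measure" and i :: "nat \<Rightarrow> 'n"
  assumes "haar_proj M mu" "odd (card {a\<in>{1..2*k}. i a = w})"
  shows "moment mu k i = 0"
proof -
  define s where "s p = (if p = w then -1 else (1::real))" for p
  have ss: "s p * s p = 1" for p by (simp add: s_def)
  have "moment mu k i = (LINT A|mu. FA A k (\<lambda>a. s (i a) *\<^sub>R ev (i a)))"
    by (rule moment_rows[OF assms(1)]) (auto simp: ev_inner s_def)
  also have "\<dots> = (LINT A|mu. (\<Prod>a\<in>{1..2*k}. s (i a)) * GG A k i)"
  proof (intro Bochner_Integration.integral_cong refl)
    fix A :: "real^'n^'n"
    have "FA A k (\<lambda>a. s (i a) *\<^sub>R ev (i a)) = (\<Prod>t\<in>{1..k}. (s (i (2*t - 1)) * s (i (2*t))) * (ev (i (2*t - 1)) \<bullet> (A *v ev (i (2*t)))))"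
      unfolding FA_def by (simp add: matrix_vector_mult_scaleR mult_ac)
    also have "\<dots> = (\<Prod>t\<in>{1..k}. s (i (2*t - 1)) * s (i (2*t))) * (\<Prod>t\<in>{1..k}. ev (i (2*t - 1)) \<bullet> (A *v ev (i (2*t))))"
      by (rule prod.distrib)
    also have "\<dots> = (\<Prod>a\<in>{1..2*k}. s (i a)) * GG A k i"
      by (simp only: prod_pairs[of "\<lambda>a. s (i a)"] GG_FA FA_def)
    finally show "FA A k (\<lambda>a. s (i a) *\<^sub>R ev (i a)) = (\<Prod>a\<in>{1..2*k}. s (i a)) * GG A k i" .
  qed
  also have "(\<Prod>a\<in>{1..2*k}. s (i a)) = -1"
  proof -
    have eqS: "{1..2*k} \<inter> {a. i a = w} = {a\<in>{1..2*k}. i a = w}" by blast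
    have "(\<Prod>a\<in>{1..2*k}. s (i a)) = (\<Prod>a\<in>{1..2*k} \<inter> {a. i a = w}. -1) * (\<Prod>a\<in>{1..2*k} \<inter> - {a. i a = w}. 1)"
      unfolding s_def by (rule prod.If_cases) simp
    also have "\<dots> = (-1) ^ card ({1..2*k} \<inter> {a. i a = w})"
      by (simp only: prod_constant mult_1_right power_one)
    also have "\<dots> = (-1) ^ card {a\<in>{1..2*k}. i a = w}" by (simp only: eqS)
    also have "\<dots> = -1" using assms(2) by simp
    finally show ?thesis .
  qed
  finally have "moment mu k i = - moment mu k i" by (simp add: moment_GG)
  then show ?thesis by simp
qed




definition rrow :: "'n \<Rightarrow> 'n \<Rightarrow> 'n \<Rightarrow> real^'n" where
  "rrow v w p = (if p = v then sqrt (1/2) *\<^sub>R (ev v - ev w) else if p = w then sqrt (1/2) *\<^sub>R (ev v + ev w) else ev p)"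

lemma rrow_orth:
  assumes "v \<noteq> w"
  shows "rrow v w p \<bullet> rrow v w q = (if p = q then 1 else 0)"
proof -
  have cc: "sqrt (1/2) * sqrt (1/2) = (1/2::real)" by simp
  have cc2: "sqrt (1/2) * 2 * sqrt (1/2) = (1::real)"
  proof -
    have "sqrt (1/2) * 2 * sqrt (1/2) = 2 * (sqrt (1/2) * sqrt (1/2::real))" by (simp only: ac_simps)
    also have "\<dots> = 1" by (simp only: cc)
    finally show ?thesis .
  qed
  show ?thesis unfolding rrow_def using assms
    by (auto simp: ev_inner inner_diff_left inner_diff_right inner_add_left inner_add_right mult.assoc[symmetric] cc cc2)
qed

lemma rrow_local:
  assumes "\<And>a. a \<in> {1..2*k} \<Longrightarrow> i a \<noteq> w" "a \<in> {1..2*k}"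
  shows "rrow v w (i a) = (if a \<in> {a\<in>{1..2*k}. i a = v} then sqrt (1/2) *\<^sub>R (ev v - ev w) else ev (i a))"
  using assms by (auto simp: rrow_def)

lemma fun_U:
  assumes "U \<subseteq> {a\<in>{1..2*k}. i a = v}"
  shows "(\<lambda>b. if b \<in> U then ev w else if b \<in> {a\<in>{1..2*k}. i a = v} then ev v else ev (i b)) = (\<lambda>b. ev (if b \<in> U then w else i b))"
  using assms by (auto simp: fun_eq_iff)

lemma moment_rot:
  fixes mu :: "(real^'n^'n) measure" and i :: "nat \<Rightarrow> 'n"
  assumes haar: "haar_proj M mu" and vw: "v \<noteq> w" and nw: "\<And>a. a \<in> {1..2*k} \<Longrightarrow> i a \<noteq> w"
  shows "moment mu k i = sqrt (1/2) ^ card {a\<in>{1..2*k}. i a = v} *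
     (\<Sum>U\<in>Pow {a\<in>{1..2*k}. i a = v}. (-1) ^ card U * moment mu k (\<lambda>b. if b \<in> U then w else i b))"
proof -
  define V where "V = {a\<in>{1..2*k}. i a = v}"
  define c where "c = sqrt (1/2::real)"
  have finV: "finite V" and subV: "V \<subseteq> {1..2*k}" by (auto simp: V_def)
  have "moment mu k i = (LINT A|mu. FA A k (\<lambda>a. rrow v w (i a)))"
    by (rule moment_rows[OF haar rrow_orth[OF vw]])
  also have "\<dots> = (LINT A|mu. FA A k (\<lambda>b. if b \<in> V then c *\<^sub>R (ev v - ev w) else ev (i b)))"
    by (intro Bochner_Integration.integral_cong refl FA_local) (use nw in \<open>auto simp: rrow_def V_def c_def\<close>)
  also have "\<dots> = (LINT A|mu. c ^ card V * (\<Sum>U\<in>Pow V. (-1) ^ card U * GG A k (\<lambda>b. if b \<in> U then w else i b)))"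
  proof (intro Bochner_Integration.integral_cong refl)
    fix A :: "real^'n^'n"
    have lin: "\<forall>a\<in>V. lin_at (FA A k) a" using subV lin_FA by blast
    have "FA A k (\<lambda>b. if b \<in> V then c *\<^sub>R (ev v - ev w) else ev (i b)) =
       c ^ card V * (\<Sum>U\<in>Pow V. (-1) ^ card U * FA A k (\<lambda>b. if b \<in> U then ev w else if b \<in> V then ev v else ev (i b)))"
      by (rule expand[OF finV lin])
    also have "\<dots> = c ^ card V * (\<Sum>U\<in>Pow V. (-1) ^ card U * GG A k (\<lambda>b. if b \<in> U then w else i b))"
      unfolding GG_FA V_def by (intro arg_cong[where f="\<lambda>s. c ^ _ * s"] sum.cong refl) (simp add: fun_U)
    finally show "FA A k (\<lambda>b. if b \<in> V then c *\<^sub>R (ev v - ev w) else ev (i b)) =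
       c ^ card V * (\<Sum>U\<in>Pow V. (-1) ^ card U * GG A k (\<lambda>b. if b \<in> U then w else i b))" .
  qed
  also have "\<dots> = c ^ card V * (\<Sum>U\<in>Pow V. (-1) ^ card U * moment mu k (\<lambda>b. if b \<in> U then w else i b))"
  proof -
    have "(LINT A|mu. (\<Sum>U\<in>Pow V. (-1) ^ card U * GG A k (\<lambda>b. if b \<in> U then w else i b))) =
      (\<Sum>U\<in>Pow V. (LINT A|mu. (-1) ^ card U * GG A k (\<lambda>b. if b \<in> U then w else i b)))"
      by (rule Bochner_Integration.integral_sum) (rule integrable_mult_right[OF integrable_GG[OF haar]])
    then show ?thesis by (simp add: moment_GG)
  qed
  finally show ?thesis by (simp add: V_def c_def)
qed

lemma delta_rot:
  fixes i :: "nat \<Rightarrow> 'n::finite"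
  assumes pp: "pair_partition k m" and vw: "v \<noteq> w" and nw: "\<And>a. a \<in> {1..2*k} \<Longrightarrow> i a \<noteq> w"
  shows "(if admissible m i then 1 else 0) = sqrt (1/2) ^ card {a\<in>{1..2*k}. i a = v} *
     (\<Sum>U\<in>Pow {a\<in>{1..2*k}. i a = v}. (-1) ^ card U * (if admissible m (\<lambda>b. if b \<in> U then w else i b) then 1 else 0))"
proof -
  define V where "V = {a\<in>{1..2*k}. i a = v}"
  define c where "c = sqrt (1/2::real)"
  have finV: "finite V" and subV: "V \<subseteq> {1..2*k}" by (auto simp: V_def)
  have "(if admissible m i then 1 else 0) = FD m (\<lambda>a. ev (i a))" by (rule FD_ev[OF pp, symmetric])
  also have "\<dots> = FD m (\<lambda>a. rrow v w (i a))"
    by (rule FD_orth[symmetric]) (simp add: rrow_orth[OF vw] ev_inner)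
  also have "\<dots> = FD m (\<lambda>b. if b \<in> V then c *\<^sub>R (ev v - ev w) else ev (i b))"
    by (intro FD_local[OF pp]) (use nw in \<open>auto simp: rrow_def V_def c_def\<close>)
  also have "\<dots> = c ^ card V * (\<Sum>U\<in>Pow V. (-1) ^ card U * FD m (\<lambda>b. if b \<in> U then ev w else if b \<in> V then ev v else ev (i b)))"
    by (rule expand[OF finV]) (use subV lin_FD[OF pp] in blast)
  also have "\<dots> = c ^ card V * (\<Sum>U\<in>Pow V. (-1) ^ card U * (if admissible m (\<lambda>b. if b \<in> U then w else i b) then 1 else 0))"
    unfolding V_def by (intro arg_cong[where f="\<lambda>s. c ^ _ * s"] sum.cong refl) (simp add: fun_U FD_ev[OF pp])
  finally show ?thesis by (simp add: V_def c_def)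
qed




lemma inj_extend:
  fixes f :: "'a::finite \<Rightarrow> 'a"
  assumes "inj_on f A"
  shows "\<exists>g. inj g \<and> (\<forall>x\<in>A. g x = f x)"
proof -
  have cA: "card (f ` A) = card A" using assms by (simp add: card_image)
  have "card (UNIV - A) = card (UNIV - f ` A)"
    by (simp add: card_Diff_subset cA)
  then obtain h where h: "bij_betw h (UNIV - A) (UNIV - f ` A)"
    using finite_same_card_bij[of "UNIV - A" "UNIV - f ` A"] by auto
  define g where "g x = (if x \<in> A then f x else h x)" for x
  have "inj g"
  proof (rule injI)
    fix x y assume e: "g x = g y"
    show "x = y"
    proof (cases "x \<in> A"; cases "y \<in> A")
      assume "x \<in> A" "y \<in> A" then show ?thesis using e assms by (simp add: g_def inj_on_def)
    next
      assume "x \<notin> A" "y \<notin> A" then show ?thesis using e h by (simp add: g_def bij_betw_def inj_on_def)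
    next
      assume xy: "x \<in> A" "y \<notin> A"
      then have "h y \<notin> f ` A" using h by (auto simp: bij_betw_def)
      moreover have "f x \<in> f ` A" using xy by blast
      moreover have "f x = h y" using e xy by (simp add: g_def)
      ultimately show ?thesis by simp
    next
      assume xy: "x \<notin> A" "y \<in> A"
      then have "h x \<notin> f ` A" using h by (auto simp: bij_betw_def)
      moreover have "f y \<in> f ` A" using xy by blast
      moreover have "h x = f y" using e xy by (simp add: g_def)
      ultimately show ?thesis by simp
    qed
  qed
  then show ?thesis by (auto simp: g_def)
qed

lemma same_pattern_perm:
  fixes i j :: "nat \<Rightarrow> 'n::finite"
  assumes "\<And>a b. a \<in> P \<Longrightarrow> b \<in> P \<Longrightarrow> (i a = i b \<longleftrightarrow> j a = j b)"
  shows "\<exists>\<sigma>. inj \<sigma> \<and> (\<forall>a\<in>P. \<sigma> (j a) = i a)"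
proof -
  define f where "f y = i (SOME a. a \<in> P \<and> j a = y)" for y
  have fj: "f (j a) = i a" if "a \<in> P" for a
  proof -
    have "\<exists>b. b \<in> P \<and> j b = j a" using that by blast
    then have "(SOME b. b \<in> P \<and> j b = j a) \<in> P \<and> j (SOME b. b \<in> P \<and> j b = j a) = j a" by (rule someI_ex)
    then show ?thesis using assms that by (simp add: f_def)
  qed
  have "inj_on f (j ` P)"
  proof (rule inj_onI)
    fix x y assume "x \<in> j ` P" "y \<in> j ` P" "f x = f y"
    then obtain a b where "a \<in> P" "b \<in> P" "x = j a" "y = j b" "i a = i b" using fj by auto
    then show "x = y" using assms by blast
  qed
  then obtain g where "inj g" "\<forall>x\<in>j ` P. g x = f x" using inj_extend by blast
  then show ?thesis using fj by auto
qed

lemma adm_block: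
  assumes pp: "pair_partition k m" and ad: "admissible m i" and b: "b \<in> m" "a \<in> b" "a' \<in> b"
  shows "i a = i a'"
proof -
  have c: "card b = 2" using pp_card[OF pp b(1)] .
  have "i (Min b) = i (Max b)" using admissible_MinMax[OF pp] ad b(1) by blast
  moreover have "b = {Min b, Max b}" using card2_MinMax(1)[OF c] .
  ultimately show ?thesis using b(2,3) by (metis insert_iff singletonD)
qed

definition cnt :: "nat \<Rightarrow> (nat \<Rightarrow> 'n) \<Rightarrow> 'n \<Rightarrow> nat" where
  "cnt k i x = card {a\<in>{1..2*k}. i a = x}"

lemma adm_even:
  assumes pp: "pair_partition k m" and ad: "admissible m i"
  shows "even (cnt k i x)"
proof -
  define C where "C = {b\<in>m. \<forall>a\<in>b. i a = x}"
  have U: "\<Union>C = {a\<in>{1..2*k}. i a = x}"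
  proof
    show "\<Union>C \<subseteq> {a\<in>{1..2*k}. i a = x}"
    proof
      fix a assume "a \<in> \<Union>C"
      then obtain b where b: "b \<in> m" "a \<in> b" "\<forall>a\<in>b. i a = x" by (auto simp: C_def)
      then have "a \<in> {1..2*k}" using pp_sub[OF pp b(1)] by blast
      then show "a \<in> {a\<in>{1..2*k}. i a = x}" using b by simp
    qed
    show "{a\<in>{1..2*k}. i a = x} \<subseteq> \<Union>C"
    proof
      fix a assume a: "a \<in> {a\<in>{1..2*k}. i a = x}"
      then obtain b where b: "b \<in> m" "a \<in> b" using pp_cover[OF pp] by blast
      have "\<forall>a'\<in>b. i a' = x" using adm_block[OF pp ad b] a by auto
      then show "a \<in> \<Union>C" using b by (auto simp: C_def)
    qed
  qed
  have fin: "finite b" if "b \<in> C" for b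
    using pp_card[OF pp, of b] that by (auto simp: C_def intro: card_ge_0_finite)
  have disj: "pairwise disjnt C"
    unfolding pairwise_def disjnt_def using pp_disj[OF pp] by (auto simp: C_def)
  have "cnt k i x = card (\<Union>C)" by (simp add: cnt_def U)
  also have "\<dots> = sum card C" by (rule card_Union_disjoint[OF disj fin])
  also have "\<dots> = sum (\<lambda>_. 2) C" using pp_card[OF pp] by (intro sum.cong) (auto simp: C_def)
  finally show ?thesis by simp
qed

definition blocks :: "nat \<Rightarrow> (nat \<Rightarrow> 'n) \<Rightarrow> nat set set" where
  "blocks k i = (\<lambda>x. {a\<in>{1..2*k}. i a = x}) ` (i ` {1..2*k})"

lemma blocks_pp:
  assumes two: "\<And>x. x \<in> i ` {1..2*k} \<Longrightarrow> cnt k i x = 2"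
  shows "pair_partition k (blocks k i)"
  unfolding pair_partition_def partition_on_def
proof (intro conjI)
  show "\<Union>(blocks k i) = {1..2*k}" by (auto simp: blocks_def)
  show "disjoint (blocks k i)" by (auto simp: blocks_def disjoint_def)
  show "{} \<notin> blocks k i" by (auto simp: blocks_def)
  show "\<forall>b\<in>blocks k i. card b = 2" using two by (auto simp: blocks_def cnt_def)
qed

lemma blocks_sa:
  assumes two: "\<And>x. x \<in> i ` {1..2*k} \<Longrightarrow> cnt k i x = 2"
  shows "strongly_admissible k (blocks k i) i"
  unfolding strongly_admissible_def
proof (intro ballI impI)
  fix a b assume ab: "a \<in> {1..2*k}" "b \<in> {1..2*k}" "a \<noteq> b"
  show "{a, b} \<in> blocks k i \<longleftrightarrow> i a = i b"
  proof
    assume "{a, b} \<in> blocks k i"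
    then obtain x0 where e: "{a,b} = {c\<in>{1..2*k}. i c = i x0}" by (auto simp: blocks_def)
    have "a \<in> {c\<in>{1..2*k}. i c = i x0}" "b \<in> {c\<in>{1..2*k}. i c = i x0}" unfolding e[symmetric] by simp_all
    then show "i a = i b" by simp
  next
    assume e: "i a = i b"
    define S where "S = {c\<in>{1..2*k}. i c = i a}"
    have "card S = 2" using two[of "i a"] ab by (simp add: S_def cnt_def)
    moreover have "{a, b} \<subseteq> S" using ab e by (auto simp: S_def)
    moreover have "card {a, b} = 2" using ab by simp
    ultimately have "{a, b} = S" by (intro card_subset_eq) (auto simp: S_def)
    then show "{a, b} \<in> blocks k i" using ab by (auto simp: blocks_def S_def)
  qed
qed

lemma blocks_unique:
  assumes two: "\<And>x. x \<in> i ` {1..2*k} \<Longrightarrow> cnt k i x = 2"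
    and pp: "pair_partition k m" and ad: "admissible m i"
  shows "m = blocks k i"
proof -
  have key: "b = {a\<in>{1..2*k}. i a = i a0}" if b: "b \<in> m" "a0 \<in> b" for b a0
  proof -
    have sub: "b \<subseteq> {a\<in>{1..2*k}. i a = i a0}" using adm_block[OF pp ad b(1) _ b(2)] pp_sub[OF pp b(1)] by auto
    have "a0 \<in> {1..2*k}" using pp_sub[OF pp b(1)] b(2) by auto
    then have "card {a\<in>{1..2*k}. i a = i a0} = 2" using two[of "i a0"] by (simp add: cnt_def)
    moreover have "card b = 2" using pp_card[OF pp b(1)] .
    ultimately show ?thesis using sub by (intro card_subset_eq) auto
  qed
  show ?thesis
  proof
    show "m \<subseteq> blocks k i"
    proof
      fix b assume b: "b \<in> m"
      have "b \<noteq> {}" using pp_card[OF pp b] by auto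
      then obtain a0 where a0: "a0 \<in> b" by blast
      have "a0 \<in> {1..2*k}" using pp_sub[OF pp b] a0 by auto
      then show "b \<in> blocks k i" using key[OF b a0] by (auto simp: blocks_def)
    qed
    show "blocks k i \<subseteq> m"
    proof
      fix S assume "S \<in> blocks k i"
      then obtain a0 where a0: "a0 \<in> {1..2*k}" "S = {a\<in>{1..2*k}. i a = i a0}" by (auto simp: blocks_def)
      obtain b where b: "b \<in> m" "a0 \<in> b" using pp_cover[OF pp a0(1)] by blast
      then show "S \<in> m" using key[OF b] a0(2) by simp
    qed
  qed
qed

lemma blocks_adm:
  assumes two: "\<And>x. x \<in> i ` {1..2*k} \<Longrightarrow> cnt k i x = 2"
  shows "admissible (blocks k i) i"
  unfolding admissible_def
proof (intro allI impI)
  fix a b assume "{a, b} \<in> blocks k i"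
  then obtain x0 where e: "{a,b} = {c\<in>{1..2*k}. i c = i x0}" by (auto simp: blocks_def)
  have "a \<in> {c\<in>{1..2*k}. i c = i x0}" "b \<in> {c\<in>{1..2*k}. i c = i x0}" unfolding e[symmetric] by simp_all
  then show "i a = i b" by simp
qed

lemma pp_finite_set: "finite {m. pair_partition k m}"
proof -
  have "{m. pair_partition k m} \<subseteq> Pow (Pow {1..2*k})" using pp_sub by blast
  then show ?thesis by (rule finite_subset) simp
qed

lemma pp_nonempty: "1 \<le> k \<Longrightarrow> pair_partition k m \<Longrightarrow> m \<noteq> {}"
  unfolding pair_partition_def partition_on_def by auto




definition XX :: "(real^'n^'n) measure \<Rightarrow> nat \<Rightarrow> (nat \<Rightarrow> 'n) \<Rightarrow> real" where
  "XX mu k i = moment mu k i - (\<Sum>m\<in>{m. pair_partition k m}. (if admissible m i then 1 else 0) * WgA mu k m)"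

lemma X_odd:
  fixes mu :: "(real^'n^'n) measure" and i :: "nat \<Rightarrow> 'n"
  assumes haar: "haar_proj M mu" and odd: "odd (cnt k i w)"
  shows "XX mu k i = 0"
proof -
  have "moment mu k i = 0" using moment_odd[OF haar] odd by (simp add: cnt_def)
  moreover have "\<not> admissible m i" if "pair_partition k m" for m
  proof
    assume "admissible m i"
    then have "even (cnt k i w)" by (rule adm_even[OF that])
    with odd show False by simp
  qed
  ultimately show ?thesis by (simp add: XX_def)
qed

lemma adm_local:
  assumes pp: "pair_partition k m" and eq: "\<And>a. a \<in> {1..2*k} \<Longrightarrow> i a = j a"
  shows "admissible m i \<longleftrightarrow> admissible m j"
proof -
  have "i (Min b) = j (Min b) \<and> i (Max b) = j (Max b)" if "b \<in> m" for b
    using pp_MinMax_mem[OF pp that] pp_sub[OF pp that] eq by blast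
  then show ?thesis unfolding admissible_MinMax[OF pp] by auto
qed

lemma X_local:
  fixes mu :: "(real^'n^'n) measure" and i j :: "nat \<Rightarrow> 'n"
  assumes eq: "\<And>a. a \<in> {1..2*k} \<Longrightarrow> i a = j a"
  shows "XX mu k i = XX mu k j"
  unfolding XX_def using moment_local[OF eq] adm_local[OF _ eq] by simp

lemma X_perm:
  fixes mu :: "(real^'n^'n) measure" and i :: "nat \<Rightarrow> 'n"
  assumes haar: "haar_proj M mu" and inj: "inj \<sigma>"
  shows "XX mu k (\<lambda>a. \<sigma> (i a)) = XX mu k i"
proof -
  have "admissible m (\<lambda>a. \<sigma> (i a)) \<longleftrightarrow> admissible m i" for m
    unfolding admissible_def using inj by (simp add: inj_eq)
  then show ?thesis unfolding XX_def using moment_perm[OF haar inj] by simp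
qed

lemma X_base:
  fixes mu :: "(real^'n^'n) measure" and i :: "nat \<Rightarrow> 'n"
  assumes haar: "haar_proj M mu" and k1: "1 \<le> k" and two: "\<And>x. x \<in> i ` {1..2*k} \<Longrightarrow> cnt k i x = 2"
  shows "XX mu k i = 0"
proof -
  let ?B = "blocks k i"
  let ?PP = "{m. pair_partition k m}"
  have ppB: "pair_partition k ?B" by (rule blocks_pp[OF two])
  have saB: "strongly_admissible k ?B i" by (rule blocks_sa[OF two])
  have "(\<Sum>m\<in>?PP. (if admissible m i then 1 else 0) * WgA mu k m) = (\<Sum>m\<in>?PP. if m = ?B then WgA mu k m else 0)"
  proof (intro sum.cong refl)
    fix m assume "m \<in> ?PP"
    then have pp: "pair_partition k m" by simp
    show "(if admissible m i then 1 else 0) * WgA mu k m = (if m = ?B then WgA mu k m else 0)"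
    proof (cases "m = ?B")
      case True
      then have "admissible m i" using blocks_adm[OF two] by simp
      then show ?thesis using True by simp
    next
      case False
      then have "\<not> admissible m i" using blocks_unique[OF two pp] by blast
      then show ?thesis using False by simp
    qed
  qed
  also have "\<dots> = WgA mu k ?B" using pp_finite_set ppB by (simp add: sum.delta)
  also have "\<dots> = moment mu k (SOME j. strongly_admissible k ?B j)"
    using pp_nonempty[OF k1 ppB] by (simp add: WgA_def)
  also have "\<dots> = moment mu k i"
  proof -
    define j0 where "j0 = (SOME j :: nat \<Rightarrow> 'n. strongly_admissible k ?B j)"
    have sa0: "strongly_admissible k ?B j0" unfolding j0_def by (rule someI[of _ i]) (rule saB)
    have "i a = i b \<longleftrightarrow> j0 a = j0 b" if ab: "a \<in> {1..2*k}" "b \<in> {1..2*k}" for a b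
    proof (cases "a = b")
      case True
      then show ?thesis by simp
    next
      case False
      have "({a,b} \<in> ?B) = (i a = i b)" using saB ab False unfolding strongly_admissible_def by blast
      moreover have "({a,b} \<in> ?B) = (j0 a = j0 b)" using sa0 ab False unfolding strongly_admissible_def by blast
      ultimately show ?thesis by simp
    qed
    then obtain \<sigma> where \<sigma>: "inj \<sigma>" "\<forall>a\<in>{1..2*k}. \<sigma> (j0 a) = i a"
      using same_pattern_perm[of "{1..2*k}" i j0] by blast
    have "moment mu k j0 = moment mu k (\<lambda>a. \<sigma> (j0 a))" using moment_perm[OF haar \<sigma>(1)] by simp
    also have "\<dots> = moment mu k i" by (rule moment_local) (use \<sigma>(2) in simp)
    finally show ?thesis by (simp add: j0_def)
  qed
  finally show ?thesis by (simp add: XX_def)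
qed

lemma X_rot:
  fixes mu :: "(real^'n^'n) measure" and i :: "nat \<Rightarrow> 'n"
  assumes haar: "haar_proj M mu" and vw: "v \<noteq> w" and nw: "\<And>a. a \<in> {1..2*k} \<Longrightarrow> i a \<noteq> w"
  shows "XX mu k i = sqrt (1/2) ^ card {a\<in>{1..2*k}. i a = v} *
     (\<Sum>U\<in>Pow {a\<in>{1..2*k}. i a = v}. (-1) ^ card U * XX mu k (\<lambda>b. if b \<in> U then w else i b))"
proof -
  define V where "V = {a\<in>{1..2*k}. i a = v}"
  define C where "C = sqrt (1/2::real) ^ card V"
  define PP where "PP = {m. pair_partition k m}"
  define D where "D m j = (if admissible m j then 1 else (0::real))" for m and j :: "nat \<Rightarrow> 'n"
  define W where "W m = WgA mu k m" for m
  define iU where "iU U = (\<lambda>b. if b \<in> U then w else i b)" for U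
  define s where "s U = ((-1::real) ^ card U)" for U :: "nat set"
  have mr: "moment mu k i = C * (\<Sum>U\<in>Pow V. s U * moment mu k (iU U))"
    unfolding C_def V_def s_def iU_def by (rule moment_rot[OF haar vw nw])
  have dr: "D m i = C * (\<Sum>U\<in>Pow V. s U * D m (iU U))" if "m \<in> PP" for m
    unfolding C_def V_def s_def iU_def D_def by (rule delta_rot) (use that vw nw in \<open>auto simp: PP_def\<close>)
  have "(\<Sum>m\<in>PP. D m i * W m) = (\<Sum>m\<in>PP. (C * (\<Sum>U\<in>Pow V. s U * D m (iU U))) * W m)"
    using dr by (intro sum.cong refl) auto
  also have "\<dots> = (\<Sum>m\<in>PP. \<Sum>U\<in>Pow V. C * (s U * (D m (iU U) * W m)))"
    by (simp add: sum_distrib_left sum_distrib_right mult.assoc)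
  also have "\<dots> = (\<Sum>U\<in>Pow V. \<Sum>m\<in>PP. C * (s U * (D m (iU U) * W m)))"
    by (rule sum.swap)
  also have "\<dots> = C * (\<Sum>U\<in>Pow V. s U * (\<Sum>m\<in>PP. D m (iU U) * W m))"
    by (simp add: sum_distrib_left)
  finally have sr: "(\<Sum>m\<in>PP. D m i * W m) = C * (\<Sum>U\<in>Pow V. s U * (\<Sum>m\<in>PP. D m (iU U) * W m))" .
  have "XX mu k i = moment mu k i - (\<Sum>m\<in>PP. D m i * W m)"
    by (simp add: XX_def PP_def D_def W_def)
  also have "\<dots> = C * ((\<Sum>U\<in>Pow V. s U * moment mu k (iU U)) - (\<Sum>U\<in>Pow V. s U * (\<Sum>m\<in>PP. D m (iU U) * W m)))"
    unfolding mr sr by (simp add: right_diff_distrib)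
  also have "\<dots> = C * (\<Sum>U\<in>Pow V. s U * XX mu k (iU U))"
    by (simp add: XX_def PP_def D_def W_def sum_subtractf right_diff_distrib)
  finally show ?thesis by (simp add: C_def V_def s_def iU_def)
qed




definition msq :: "nat \<Rightarrow> (nat \<Rightarrow> 'n::finite) \<Rightarrow> nat" where
  "msq k i = (\<Sum>x\<in>UNIV. (cnt k i x)^2)"

lemma sum_split2:
  fixes f :: "'n::finite \<Rightarrow> nat"
  assumes "v \<noteq> w"
  shows "sum f UNIV = f v + f w + sum f (UNIV - {v, w})"
proof -
  have "sum f UNIV = f v + sum f (UNIV - {v})" by (simp add: sum.remove)
  also have "sum f (UNIV - {v}) = f w + sum f (UNIV - {v} - {w})"
    using assms by (intro sum.remove) auto
  also have "UNIV - {v} - {w} = UNIV - {v, w}" by auto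
  finally show ?thesis by simp
qed

lemma sq_ineq:
  fixes u r :: nat
  assumes "0 < u" "u < r"
  shows "u^2 + (r - u)^2 < r^2"
proof -
  obtain t where t: "r = u + t" "0 < t" using assms by (metis add_diff_inverse_nat less_imp_not_less zero_less_diff)
  have "u^2 + t^2 < u^2 + t^2 + 2*u*t" using assms t by simp
  also have "\<dots> = r^2" using t by (simp add: power2_sum)
  finally show ?thesis using t by simp
qed

lemma msq_dec:
  fixes i :: "nat \<Rightarrow> 'n::finite"
  assumes vw: "v \<noteq> w" and nw: "\<And>a. a \<in> {1..2*k} \<Longrightarrow> i a \<noteq> w"
    and U: "U \<subseteq> {a\<in>{1..2*k}. i a = v}" "U \<noteq> {}" "U \<noteq> {a\<in>{1..2*k}. i a = v}"
  shows "msq k (\<lambda>b. if b \<in> U then w else i b) < msq k i"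
proof -
  define V where "V = {a\<in>{1..2*k}. i a = v}"
  define j where "j = (\<lambda>b. if b \<in> U then w else i b)"
  have finV: "finite V" by (simp add: V_def)
  have UV: "U \<subseteq> V" "U \<noteq> {}" "U \<noteq> V" using U by (auto simp: V_def)
  have finU: "finite U" using finite_subset[OF UV(1) finV] .
  have psub: "U \<subset> V" using UV by auto
  have cUV: "card U < card V" by (rule psubset_card_mono[OF finV psub])
  have cU0: "0 < card U" using finU UV(2) by (simp add: card_gt_0_iff)
  have jw: "{a\<in>{1..2*k}. j a = w} = U" using UV(1) nw by (auto simp: j_def V_def)
  have jv: "{a\<in>{1..2*k}. j a = v} = V - U" using vw by (auto simp: j_def V_def)
  have jx: "{a\<in>{1..2*k}. j a = x} = {a\<in>{1..2*k}. i a = x}" if "x \<noteq> v" "x \<noteq> w" for x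
    using that UV(1) by (auto simp: j_def V_def)
  have iw: "{a\<in>{1..2*k}. i a = w} = {}" using nw by auto
  have "msq k j = (card U)^2 + (card V - card U)^2 + (\<Sum>x\<in>UNIV - {v, w}. (cnt k i x)^2)"
  proof -
    have "msq k j = (cnt k j v)^2 + (cnt k j w)^2 + (\<Sum>x\<in>UNIV - {v, w}. (cnt k j x)^2)"
      unfolding msq_def by (rule sum_split2[OF vw])
    also have "(\<Sum>x\<in>UNIV - {v, w}. (cnt k j x)^2) = (\<Sum>x\<in>UNIV - {v, w}. (cnt k i x)^2)"
    proof (intro sum.cong refl)
      fix x assume "x \<in> UNIV - {v, w}"
      then have "cnt k j x = cnt k i x" unfolding cnt_def by (intro arg_cong[where f=card] jx) auto
      then show "(cnt k j x)^2 = (cnt k i x)^2" by simp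
    qed
    moreover have "cnt k j w = card U" unfolding cnt_def jw ..
    moreover have "cnt k j v = card V - card U" unfolding cnt_def jv by (rule card_Diff_subset[OF finU UV(1)])
    ultimately show ?thesis by (simp only:)
  qed
  also have "\<dots> < (card V)^2 + (\<Sum>x\<in>UNIV - {v, w}. (cnt k i x)^2)"
    using sq_ineq[OF cU0 cUV] by simp
  also have "\<dots> = msq k i"
  proof -
    have "msq k i = (cnt k i v)^2 + (cnt k i w)^2 + (\<Sum>x\<in>UNIV - {v, w}. (cnt k i x)^2)"
      unfolding msq_def by (rule sum_split2[OF vw])
    moreover have "cnt k i w = 0" unfolding cnt_def iw by simp
    moreover have "cnt k i v = card V" by (simp add: cnt_def V_def)
    ultimately show ?thesis by simp
  qed
  finally show ?thesis by (simp add: j_def)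
qed

lemma card_image_bound:
  fixes i :: "nat \<Rightarrow> 'n::finite"
  assumes ev: "\<And>x. even (cnt k i x)" and v: "v \<in> i ` {1..2*k}" "cnt k i v \<noteq> 2"
  shows "card (i ` {1..2*k}) < k"
proof -
  let ?S = "i ` {1..2*k}"
  have pos: "cnt k i x \<ge> 2" if "x \<in> ?S" for x
  proof -
    have "{a\<in>{1..2*k}. i a = x} \<noteq> {}" using that by auto
    then have p: "cnt k i x > 0" by (simp add: cnt_def card_gt_0_iff)
    from ev[of x] obtain t where "cnt k i x = 2*t" by (auto elim: evenE)
    with p show ?thesis by simp
  qed
  have v4: "cnt k i v \<ge> 4"
  proof -
    from ev[of v] obtain t where t: "cnt k i v = 2*t" by (auto elim: evenE)
    with pos[OF v(1)] v(2) show ?thesis by simp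
  qed
  have "2*k = card {1..2*k}" by simp
  also have "\<dots> = (\<Sum>y\<in>?S. cnt k i y)"
    unfolding cnt_def using sum.image_gen[of "{1..2*k}" "\<lambda>_. 1::nat" i] by simp
  also have "\<dots> = cnt k i v + (\<Sum>y\<in>?S - {v}. cnt k i y)" using v(1) by (simp add: sum.remove)
  also have "\<dots> \<ge> 4 + (\<Sum>y\<in>?S - {v}. 2)" using v4 pos by (intro add_mono sum_mono) auto
  finally have "2*k \<ge> 4 + 2 * card (?S - {v})" by simp
  moreover have "card (?S - {v}) = card ?S - 1" using v(1) by simp
  moreover have "card ?S > 0" by (rule card_gt_0_iff[THEN iffD2]) (use v(1) in auto)
  ultimately show ?thesis by linarith
qed

lemma X_zero:
  fixes mu :: "(real^'n^'n) measure" and i :: "nat \<Rightarrow> 'n"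
  assumes haar: "haar_proj M mu" and k1: "1 \<le> k" and kN: "k \<le> CARD('n)"
  shows "XX mu k i = 0"
proof -
  have "\<forall>i. msq k i = n \<longrightarrow> XX mu k i = 0" for n
  proof (induction n rule: less_induct)
    case (less n)
    show ?case
    proof (intro allI impI)
      fix i :: "nat \<Rightarrow> 'n" assume hn: "msq k i = n"
      show "XX mu k i = 0"
      proof (cases "\<exists>w. odd (cnt k i w)")
        case True
        then obtain w where "odd (cnt k i w)" by blast
        then show ?thesis by (rule X_odd[OF haar])
      next
        case False
        then have ev: "\<And>x. even (cnt k i x)" by blast
        show ?thesis
        proof (cases "\<forall>x\<in>i ` {1..2*k}. cnt k i x = 2")
          case True
          then show ?thesis using X_base[OF haar k1] by blast
        next
          case False
          then obtain v where v: "v \<in> i ` {1..2*k}" "cnt k i v \<noteq> 2" by blast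
          have "card (i ` {1..2*k}) < CARD('n)" using card_image_bound[OF ev v] kN by linarith
          then have "i ` {1..2*k} \<noteq> UNIV" by auto
          then obtain w where w: "w \<notin> i ` {1..2*k}" by blast
          have vw: "v \<noteq> w" using v w by blast
          have nw: "\<And>a. a \<in> {1..2*k} \<Longrightarrow> i a \<noteq> w" using w by blast
          define V where "V = {a\<in>{1..2*k}. i a = v}"
          define c where "c = sqrt (1/2::real)"
          define iU where "iU U = (\<lambda>b. if b \<in> U then w else i b)" for U
          have finV: "finite V" by (simp add: V_def)
          have cV: "card V = cnt k i v" by (simp add: V_def cnt_def)
          have Vne: "V \<noteq> {}" using v(1) by (auto simp: V_def)
          have evV: "even (card V)" using ev cV by simp
          have V4: "card V \<ge> 4"
          proof -
            have "card V > 0" using finV Vne by (simp add: card_gt_0_iff)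
            moreover from evV obtain t where t: "card V = 2*t" by (auto elim: evenE)
            ultimately show ?thesis using v(2) cV by simp
          qed
          have rot: "XX mu k i = c ^ card V * (\<Sum>U\<in>Pow V. (-1) ^ card U * XX mu k (iU U))"
            unfolding c_def V_def iU_def by (rule X_rot[OF haar vw nw])
          have zero: "XX mu k (iU U) = 0" if "U \<in> Pow V - {{}, V}" for U
          proof -
            have "msq k (iU U) < n" unfolding hn[symmetric] iU_def
              by (rule msq_dec[OF vw nw]) (use that in \<open>auto simp: V_def\<close>)
            then show ?thesis using less.IH by blast
          qed
          have e0: "iU {} = i" by (simp add: iU_def)
          define \<sigma> where "\<sigma> x = (if x = v then w else if x = w then v else x)" for x
          have inj\<sigma>: "inj \<sigma>" unfolding inj_def \<sigma>_def by auto
          have eV: "XX mu k (iU V) = XX mu k i"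
          proof -
            have "XX mu k (iU V) = XX mu k (\<lambda>a. \<sigma> (i a))"
              by (rule X_local) (use nw in \<open>auto simp: iU_def V_def \<sigma>_def\<close>)
            also have "\<dots> = XX mu k i" by (rule X_perm[OF haar inj\<sigma>])
            finally show ?thesis .
          qed
          have "(\<Sum>U\<in>Pow V. (-1) ^ card U * XX mu k (iU U)) =
              (-1) ^ card ({}::nat set) * XX mu k (iU {}) + (\<Sum>U\<in>Pow V - {{}}. (-1) ^ card U * XX mu k (iU U))"
            by (rule sum.remove) (use finV in auto)
          also have "(\<Sum>U\<in>Pow V - {{}}. (-1) ^ card U * XX mu k (iU U)) =
              (-1) ^ card V * XX mu k (iU V) + (\<Sum>U\<in>Pow V - {{}} - {V}. (-1) ^ card U * XX mu k (iU U))"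
            using finV Vne by (intro sum.remove) auto
          also have "(\<Sum>U\<in>Pow V - {{}} - {V}. (-1) ^ card U * XX mu k (iU U)) = 0"
            using zero by (intro sum.neutral) auto
          finally have S2: "(\<Sum>U\<in>Pow V. (-1) ^ card U * XX mu k (iU U)) = 2 * XX mu k i"
            using evV by (simp add: e0 eV)
          have "XX mu k i = c ^ card V * (2 * XX mu k i)" using rot unfolding S2 .
          then have eq: "XX mu k i = (2 * c ^ card V) * XX mu k i" by (simp only: mult_ac)
          have c0: "0 \<le> c" "c \<le> 1" by (auto simp: c_def)
          have "c ^ card V \<le> c ^ 4" using V4 c0 by (rule power_decreasing)
          also have "c ^ 4 = 1/4"
          proof -
            have "c ^ 4 = (c * c) * (c * c)" by (simp add: power4_eq_xxxx)
            also have "c * c = 1/2" by (simp add: c_def)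
            finally show ?thesis by simp
          qed
          finally have "2 * c ^ card V \<le> 1/2" by simp
          moreover have "0 \<le> 2 * c ^ card V" using c0 by simp
          ultimately have ne: "1 - 2 * c ^ card V \<noteq> 0" by linarith
          have "(1 - 2 * c ^ card V) * XX mu k i = 0" using eq by (simp add: left_diff_distrib)
          then show ?thesis using ne by simp
        qed
      qed
    qed
  qed
  then show ?thesis by blast
qed

theorem mainTheorem1:
  fixes mu :: "(real^'n^'n) measure" and M k :: nat and i :: "nat \<Rightarrow> 'n"
  assumes "1 \<le> M" and "M < CARD('n)"
    and "1 \<le> k" and "k \<le> CARD('n)"
    and "haar_proj M mu"
  shows "moment mu k i =
    (\<Sum>m\<in>{m. pair_partition k m}. (if admissible m i then 1 else 0) * WgA mu k m)"
  using X_zero[OF assms(5,3,4), of i] by (simp add: XX_def)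


end
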